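(* In $\mathcal{K}(m)$ (for $m$ large enough that all indices occur) the following equations hold: \begin{align*} 9z(3,\{1,2,3\})&=z(2,\{1,2\})z(2,\{3\})-z(2,\{1,3\})z(2,\{2\})+z(2,\{2,3\})z(2,\{1\})\\ &\quad+z(1,\{1,2\})z(3,\{3\})-z(1,\{1,3\})z(3,\{2\})+z(1,\{2,3\})z(3,\{1\}),\\ 9z(5,\{1,2,3\})&=z(4,\{1,2\})z(2,\{3\})-z(4,\{1,3\})z(2,\{2\})+z(4,\{2,3\})z(2,\{1\})\\ &\quad+z(3,\{1,2\})z(3,\{3\})-z(3,\{1,3\})z(3,\{2\})+z(3,\{2,3\})z(3,\{1\}),\\ 3z(4,\{1,2\})&=z(3,\{1\})z(2,\{2\})+z(2,\{1\})z(3,\{2\}),\\ 3z(6,\{1,2\})&=z(5,\{1\})z(2,\{2\})+z(4,\{1\})z(3,\{2\}),\\ z(6,\emptyset)&=0. \end{align*}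
   Context: $\mathcal{K}(m)=\mathbb{Q}[x,y,w]/(x+y+w,x^2+y^2+w^2,x^6+y^6+w^6)\otimes\bigotimes_{j=1}^m\Lambda(\alpha_j,\beta_j,\gamma_j)/(\alpha_j+\beta_j+\gamma_j)$, a graded-commutative algebra with $|x|=|y|=|w|=2$ and $|\alpha_j|=|\beta_j|=|\gamma_j|=1$. For $I=\{i_1<\dots<i_k\}\subset\{1,\dots,m\}$, $\alpha_I=\alpha_{i_1}\cdots\alpha_{i_k}$ ($\alpha_\emptyset=1$), similarly $\beta_I,\gamma_I$; for $d\ge0$, $z(d+1,I)=x^d\alpha_I+y^d\beta_I+w^d\gamma_I$. *)

theory Defs
  imports Complex_Main
begin

text \<open>
  The free graded-commutative Q-algebra on even generators x, y, w (degree 2) and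
  odd generators (degree 1) indexed by natural numbers: the odd generator with
  index 3*j is alpha_j, 3*j+1 is beta_j, 3*j+2 is gamma_j.
  A basis monomial is a pair (exponents of x,y,w ; finite set S of odd generators),
  standing for x^a y^b w^c times the product of the elements of S in increasing order.
  An element is a finitely supported function from basis monomials to rat.
\<close>

type_synonym kmon = "(nat \<times> nat \<times> nat) \<times> nat set"
type_synonym kel = "kmon \<Rightarrow> rat"

definition kmonmul :: "kmon \<Rightarrow> kmon \<Rightarrow> kmon" where
  "kmonmul a b = (case a of ((a1, a2, a3), S) \<Rightarrow> case b of ((b1, b2, b3), T) \<Rightarrow>
      ((a1 + b1, a2 + b2, a3 + b3), S \<union> T))"

text \<open>Koszul sign of multiplying two basis monomials (0 if an odd generator repeats).\<close>
definition ksign :: "kmon \<Rightarrow> kmon \<Rightarrow> rat" where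
  "ksign a b = (if snd a \<inter> snd b \<noteq> {} then 0
     else (-1) ^ card {(s, t). s \<in> snd a \<and> t \<in> snd b \<and> t < s})"

definition kzero :: kel where "kzero = (\<lambda>_. 0)"
definition kadd :: "kel \<Rightarrow> kel \<Rightarrow> kel" where "kadd f g = (\<lambda>c. f c + g c)"
definition ksmult :: "rat \<Rightarrow> kel \<Rightarrow> kel" where "ksmult r f = (\<lambda>c. r * f c)"
definition ksub :: "kel \<Rightarrow> kel \<Rightarrow> kel" where "ksub f g = (\<lambda>c. f c - g c)"

definition kmult :: "kel \<Rightarrow> kel \<Rightarrow> kel" where
  "kmult f g = (\<lambda>c. \<Sum>(a, b) \<in> {(a, b). f a \<noteq> 0 \<and> g b \<noteq> 0}.
       if kmonmul a b = c then ksign a b * f a * g b else 0)"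

definition kmono :: "kmon \<Rightarrow> kel" where "kmono u = (\<lambda>c. if c = u then 1 else 0)"

definition kone :: kel where "kone = kmono ((0, 0, 0), {})"

primrec kpow :: "kel \<Rightarrow> nat \<Rightarrow> kel" where
  "kpow f 0 = kone"
| "kpow f (Suc n) = kmult f (kpow f n)"

primrec kprod_list :: "kel list \<Rightarrow> kel" where
  "kprod_list [] = kone"
| "kprod_list (f # fs) = kmult f (kprod_list fs)"

definition kx :: kel where "kx = kmono ((1, 0, 0), {})"
definition ky :: kel where "ky = kmono ((0, 1, 0), {})"
definition kw :: kel where "kw = kmono ((0, 0, 1), {})"

definition kal :: "nat \<Rightarrow> kel" where "kal j = kmono ((0, 0, 0), {3 * j})"
definition kbe :: "nat \<Rightarrow> kel" where "kbe j = kmono ((0, 0, 0), {3 * j + 1})"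
definition kga :: "nat \<Rightarrow> kel" where "kga j = kmono ((0, 0, 0), {3 * j + 2})"

definition kalI :: "nat set \<Rightarrow> kel" where "kalI I = kprod_list (map kal (sorted_list_of_set I))"
definition kbeI :: "nat set \<Rightarrow> kel" where "kbeI I = kprod_list (map kbe (sorted_list_of_set I))"
definition kgaI :: "nat set \<Rightarrow> kel" where "kgaI I = kprod_list (map kga (sorted_list_of_set I))"

text \<open>z(n, I) = x^(n-1) alpha_I + y^(n-1) beta_I + w^(n-1) gamma_I  (used for n \<ge> 1).\<close>
definition kz :: "nat \<Rightarrow> nat set \<Rightarrow> kel" where
  "kz n I = kadd (kadd (kmult (kpow kx (n - 1)) (kalI I)) (kmult (kpow ky (n - 1)) (kbeI I)))
                 (kmult (kpow kw (n - 1)) (kgaI I))"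

text \<open>Defining relations of K(m); the odd generators with index outside {1..m} are killed,
  so that the quotient is exactly K(m).\<close>
definition krels :: "nat \<Rightarrow> kel set" where
  "krels m =
     {kadd (kadd kx ky) kw,
      kadd (kadd (kpow kx 2) (kpow ky 2)) (kpow kw 2),
      kadd (kadd (kpow kx 6) (kpow ky 6)) (kpow kw 6)}
   \<union> {kadd (kadd (kal j) (kbe j)) (kga j) | j. j \<in> {1..m}}
   \<union> {kal j | j. j \<notin> {1..m}} \<union> {kbe j | j. j \<notin> {1..m}} \<union> {kga j | j. j \<notin> {1..m}}"

inductive_set kideal :: "nat \<Rightarrow> kel set" for m :: nat where
  gen: "r \<in> krels m \<Longrightarrow> r \<in> kideal m"
| zero: "kzero \<in> kideal m"
| add: "a \<in> kideal m \<Longrightarrow> b \<in> kideal m \<Longrightarrow> kadd a b \<in> kideal m"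
| smult: "a \<in> kideal m \<Longrightarrow> ksmult c a \<in> kideal m"
| lmult: "a \<in> kideal m \<Longrightarrow> kmult (kmono u) a \<in> kideal m"
| rmult: "a \<in> kideal m \<Longrightarrow> kmult a (kmono u) \<in> kideal m"

definition keq :: "nat \<Rightarrow> kel \<Rightarrow> kel \<Rightarrow> bool" where
  "keq m a b \<longleftrightarrow> ksub a b \<in> kideal m"

end

theory Submission
  imports Defs "HOL-Library.Multiset"
begin


type_synonym key = "(nat \<times> nat \<times> nat) \<times> nat list"
type_synonym pl = "(rat \<times> key) list"

definition tom :: "key \<Rightarrow> kmon" where "tom k = (fst k, set (snd k))"
definition den :: "pl \<Rightarrow> kel" where
  "den L = (\<lambda>c. sum_list (map (\<lambda>p. if tom (snd p) = c then fst p else 0) L))"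
definition kmulk :: "key \<Rightarrow> key \<Rightarrow> key" where
  "kmulk a b = (case a of ((a1,a2,a3),l) \<Rightarrow> case b of ((b1,b2,b3),l') \<Rightarrow>
     ((a1+b1,a2+b2,a3+b3), sort (remdups (l@l'))))"
definition sgnk :: "key \<Rightarrow> key \<Rightarrow> rat" where
  "sgnk a b = (if list_ex (\<lambda>x. x \<in> set (snd b)) (snd a) then 0
     else (-1) ^ length (filter (\<lambda>(s,t). t < s) (List.product (remdups (snd a)) (remdups (snd b)))))"
definition mulL :: "pl \<Rightarrow> pl \<Rightarrow> pl" where
  "mulL A B = concat (map (\<lambda>p. map (\<lambda>q. (sgnk (snd p) (snd q) * fst p * fst q, kmulk (snd p) (snd q))) B) A)"

lemma kmonmul_tom: "kmonmul (tom a) (tom b) = tom (kmulk a b)"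
  by (cases a; cases b) (auto simp: kmonmul_def tom_def kmulk_def)

lemma ksign_tom: "ksign (tom a) (tom b) = sgnk a b"
proof -
  obtain l l' where l: "snd a = l" "snd b = l'" by auto
  have dis: "(set l \<inter> set l' \<noteq> {}) = list_ex (\<lambda>x. x \<in> set l') l"
    by (auto simp: list_ex_iff)
  have "{(s, t). s \<in> set l \<and> t \<in> set l' \<and> t < s} =
        set (filter (\<lambda>(s,t). t < s) (List.product (remdups l) (remdups l')))" by auto
  moreover have "distinct (filter (\<lambda>(s,t). t < s) (List.product (remdups l) (remdups l')))"
    by (simp add: distinct_product)
  ultimately have "card {(s, t). s \<in> set l \<and> t \<in> set l' \<and> t < s} =
        length (filter (\<lambda>(s,t). t < s) (List.product (remdups l) (remdups l')))"
    by (metis distinct_card)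
  then show ?thesis using dis l
    by (simp add: ksign_def sgnk_def tom_def)
qed

lemma den_fin: "den L a \<noteq> 0 \<Longrightarrow> a \<in> tom ` snd ` set L"
proof (induction L)
  case Nil then show ?case by (simp add: den_def)
next
  case (Cons p L)
  then show ?case by (auto simp: den_def split: if_splits)
qed

lemma sum_den:
  assumes "finite S" "tom ` snd ` set L \<subseteq> S"
  shows "(\<Sum>a\<in>S. den L a * K a) = (\<Sum>p\<leftarrow>L. fst p * K (tom (snd p)))"
  using assms(2)
proof (induction L)
  case Nil then show ?case by (simp add: den_def)
next
  case (Cons p L)
  have e: "den (p # L) a = (if tom (snd p) = a then fst p else 0) + den L a" for a
    by (simp add: den_def)
  have "(\<Sum>a\<in>S. den (p#L) a * K a) = (\<Sum>a\<in>S. (if tom (snd p) = a then fst p * K a else 0)) + (\<Sum>a\<in>S. den L a * K a)"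
    by (simp add: e distrib_right sum.distrib if_distrib[where f="\<lambda>x. x * K _"] cong: if_cong)
  also have "\<dots> = fst p * K (tom (snd p)) + (\<Sum>a\<in>S. den L a * K a)"
    using Cons.prems assms(1) by (simp add: sum.delta)
  finally show ?case using Cons by simp
qed

lemma sum_list_concat': "sum_list (concat xss) = sum_list (map sum_list (xss::rat list list))"
  by (induction xss) auto

lemma kmult_den: "kmult (den A) (den B) = den (mulL A B)"
proof
  fix c
  define SA where "SA = tom ` snd ` set A"
  define SB where "SB = tom ` snd ` set B"
  define H where "H = (\<lambda>a b. if kmonmul a b = c then ksign a b else 0)"
  have fin: "finite SA" "finite SB" by (auto simp: SA_def SB_def)
  have "kmult (den A) (den B) c = (\<Sum>(a,b)\<in>{(a, b). den A a \<noteq> 0 \<and> den B b \<noteq> 0}. H a b * den A a * den B b)"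
    unfolding kmult_def H_def by (rule sum.cong) auto
  also have "\<dots> = (\<Sum>(a,b)\<in>SA \<times> SB. H a b * den A a * den B b)"
    apply (rule sum.mono_neutral_left)
    using fin den_fin by (auto simp: SA_def SB_def)
  also have "\<dots> = (\<Sum>a\<in>SA. den A a * (\<Sum>b\<in>SB. den B b * H a b))"
    by (simp add: sum.cartesian_product[symmetric] sum_distrib_left mult_ac)
  also have "\<dots> = (\<Sum>p\<leftarrow>A. fst p * (\<Sum>b\<in>SB. den B b * H (tom (snd p)) b))"
    by (rule sum_den) (auto simp: SA_def fin)
  also have "\<dots> = (\<Sum>p\<leftarrow>A. fst p * (\<Sum>q\<leftarrow>B. fst q * H (tom (snd p)) (tom (snd q))))"
    by (subst sum_den) (auto simp: SB_def fin)
  also have "\<dots> = (\<Sum>p\<leftarrow>A. (\<Sum>q\<leftarrow>B. if tom (kmulk (snd p) (snd q)) = c then sgnk (snd p) (snd q) * fst p * fst q else 0))"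
    by (simp add: H_def kmonmul_tom ksign_tom sum_list_const_mult[symmetric] o_def mult_ac cong: if_cong)
       (intro arg_cong[where f=sum_list] map_cong refl; simp)
  also have "\<dots> = den (mulL A B) c"
    unfolding den_def mulL_def map_concat sum_list_concat' map_map o_def by (simp cong: if_cong)
  finally show "kmult (den A) (den B) c = den (mulL A B) c" .
qed

definition smL :: "rat \<Rightarrow> pl \<Rightarrow> pl" where "smL c A = map (\<lambda>p. (c * fst p, snd p)) A"

lemma den_append: "den (A @ B) = kadd (den A) (den B)"
  by (simp add: den_def kadd_def)
lemma kadd_den: "kadd (den A) (den B) = den (A @ B)"
  by (simp add: den_append)
lemma ksmult_den: "ksmult c (den A) = den (smL c A)"
  by (rule ext) (induction A; simp add: ksmult_def den_def smL_def distrib_left)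
lemma den_smL: "den (smL c A) x = c * den A x"
  using ksmult_den[of c A] by (metis ksmult_def)
lemma ksub_den: "ksub (den A) (den B) = den (A @ smL (-1) B)"
  by (simp add: den_append ksmult_den[symmetric]) (simp add: kadd_def ksub_def ksmult_def)
lemma kzero_den: "kzero = den []"
  by (simp add: kzero_def den_def)
lemma kmono_den: "kmono (tom k) = den [(1, k)]"
  by (auto simp add: kmono_def den_def)

definition "xL = [(1::rat, ((1::nat,0::nat,0::nat), []::nat list))]"
definition "yL = [(1::rat, ((0::nat,1::nat,0::nat), []::nat list))]"
definition "wL = [(1::rat, ((0::nat,0::nat,1::nat), []::nat list))]"
definition "oneL = [(1::rat, ((0::nat,0::nat,0::nat), []::nat list))]"
definition "alL j = [(1::rat, ((0::nat,0::nat,0::nat), [3*j]))]"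
definition "beL j = [(1::rat, ((0::nat,0::nat,0::nat), [3*j+1]))]"
definition "gaL j = [(1::rat, ((0::nat,0::nat,0::nat), [3*j+2]))]"

lemma kx_den: "kx = den xL" by (simp add: kx_def xL_def kmono_den[symmetric] tom_def)
lemma ky_den: "ky = den yL" by (simp add: ky_def yL_def kmono_den[symmetric] tom_def)
lemma kw_den: "kw = den wL" by (simp add: kw_def wL_def kmono_den[symmetric] tom_def)
lemma kone_den: "kone = den oneL" by (simp add: kone_def oneL_def kmono_den[symmetric] tom_def)
lemma kal_den: "kal = (\<lambda>j. den (alL j))" by (rule ext, simp add: kal_def alL_def kmono_den[symmetric] tom_def)
lemma kbe_den: "kbe = (\<lambda>j. den (beL j))" by (rule ext, simp add: kbe_def beL_def kmono_den[symmetric] tom_def)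
lemma kga_den: "kga = (\<lambda>j. den (gaL j))" by (rule ext, simp add: kga_def gaL_def kmono_den[symmetric] tom_def)

primrec powL :: "pl \<Rightarrow> nat \<Rightarrow> pl" where
  "powL A 0 = oneL" | "powL A (Suc n) = mulL A (powL A n)"
primrec prodL :: "pl list \<Rightarrow> pl" where
  "prodL [] = oneL" | "prodL (A # As) = mulL A (prodL As)"

lemma kpow_den: "kpow (den A) n = den (powL A n)"
  by (induction n) (simp_all add: kone_den kmult_den)
lemma kprod_den: "kprod_list (map (\<lambda>j. den (g j)) l) = den (prodL (map g l))"
  by (induction l) (simp_all add: kone_den kmult_den)

definition "R1L = (xL @ yL) @ wL"
definition "R2L = (powL xL 2 @ powL yL 2) @ powL wL 2"
definition "AL j = (alL j @ beL j) @ gaL j"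
definition relL :: "nat \<Rightarrow> pl" where
  "relL i = (if i = 0 then R1L else if i = 1 then R2L else AL (i - 2))"

definition certL :: "(rat \<times> key \<times> nat) list \<Rightarrow> pl" where
  "certL C = concat (map (\<lambda>(c,k,i). smL c (mulL [(1,k)] (relL i))) C)"

lemma den_R1L: "den R1L = kadd (kadd kx ky) kw"
  by (simp only: R1L_def den_append kx_den ky_den kw_den)
lemma den_R2L: "den R2L = kadd (kadd (kpow kx 2) (kpow ky 2)) (kpow kw 2)"
  by (simp only: R2L_def den_append kx_den ky_den kw_den kpow_den)
lemma den_AL: "den (AL j) = kadd (kadd (kal j) (kbe j)) (kga j)"
  by (simp only: AL_def den_append kal_den kbe_den kga_den)

lemma relL_in: "i \<le> 1 \<or> i - 2 \<in> {1..m} \<Longrightarrow> den (relL i) \<in> kideal m"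
proof -
  assume a: "i \<le> 1 \<or> i - 2 \<in> {1..m}"
  have "den (relL i) \<in> krels m"
  proof (cases "i = 0")
    case True then show ?thesis
      by (simp add: relL_def den_R1L krels_def)
  next
    case False
    show ?thesis
    proof (cases "i = 1")
      case True then show ?thesis
        by (simp add: relL_def den_R2L krels_def)
    next
      case False
      with \<open>i \<noteq> 0\<close> a show ?thesis
        by (simp add: relL_def den_AL krels_def) (metis One_nat_def atLeastAtMost_iff)
    qed
  qed
  then show ?thesis by (rule kideal.gen)
qed

lemma certL_in: "(\<forall>(c,k,i)\<in>set C. i \<le> 1 \<or> i - 2 \<in> {1..m}) \<Longrightarrow> den (certL C) \<in> kideal m"
proof (induction C)
  case Nil then show ?case by (simp add: certL_def kzero_den[symmetric] kideal.zero)
next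
  case (Cons a C)
  obtain c k i where a: "a = (c,k,i)" by (cases a) auto
  have "den (smL c (mulL [(1,k)] (relL i))) = ksmult c (kmult (kmono (tom k)) (den (relL i)))"
    by (simp add: kmono_den kmult_den ksmult_den)
  moreover have "\<dots> \<in> kideal m"
    using Cons.prems a relL_in by (auto intro: kideal.smult kideal.lmult)
  ultimately show ?case using Cons
    by (simp add: certL_def a den_append kideal.add)
qed

fun lle :: "nat list \<Rightarrow> nat list \<Rightarrow> bool" where
  "lle [] ys = True"
| "lle (x#xs) [] = False"
| "lle (x#xs) (y#ys) = (x < y \<or> (x = y \<and> lle xs ys))"

definition enc :: "key \<Rightarrow> nat list" where
  "enc k = (case k of ((a,b,c),l) \<Rightarrow> a#b#c#l)"

fun merge :: "pl \<Rightarrow> pl \<Rightarrow> pl" where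
  "merge [] ys = ys"
| "merge xs [] = xs"
| "merge (x#xs) (y#ys) = (if lle (enc (snd x)) (enc (snd y)) then x # merge xs (y#ys) else y # merge (x#xs) ys)"

lemma mset_merge: "mset (merge xs ys) = mset xs + mset ys"
  by (induction xs ys rule: merge.induct) simp_all

function msort :: "pl \<Rightarrow> pl" where
  "msort [] = []"
| "msort [x] = [x]"
| "msort (x#y#zs) = merge (msort (take ((length zs + 2) div 2) (x#y#zs))) (msort (drop ((length zs + 2) div 2) (x#y#zs)))"
  by pat_completeness auto
termination by (relation "measure length") auto

lemma mset_msort: "mset (msort xs) = mset xs"
proof (induction xs rule: msort.induct)
  case (3 x y zs)
  then show ?case
  proof -
    have "mset (x#y#zs) = mset (take ((length zs + 2) div 2) (x#y#zs)) + mset (drop ((length zs + 2) div 2) (x#y#zs))"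
      by (subst append_take_drop_id[symmetric, of _ "(length zs + 2) div 2"], subst mset_append) simp
    then show ?thesis using 3 by (simp only: msort.simps mset_merge)
  qed
qed auto

fun comb :: "pl \<Rightarrow> pl" where
  "comb (p#q#r) = (if snd p = snd q then comb ((fst p + fst q, snd p) # r) else p # comb (q#r))"
| "comb r = r"

lemma den_comb_pt: "den (comb L) c = den L c"
  by (induction L rule: comb.induct) (auto simp: den_def algebra_simps)
lemma den_comb: "den (comb L) = den L"
  using den_comb_pt by blast

lemma den_mset: "mset L = mset L' \<Longrightarrow> den L = den L'"
proof -
  assume a: "mset L = mset L'"
  have "sum_list (map g L) = sum_list (map g L')" for g :: "rat \<times> key \<Rightarrow> rat"
    by (metis a mset_map sum_mset_sum_list)
  then show ?thesis unfolding den_def by simp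
qed

definition chk :: "pl \<Rightarrow> bool" where
  "chk L = list_all (\<lambda>p. fst p = 0) (comb (msort L))"

lemma den_zero: "list_all (\<lambda>p. fst p = 0) L \<Longrightarrow> den L = kzero"
proof -
  assume "list_all (\<lambda>p. fst p = 0) L"
  then have "den L c = 0" for c by (induction L) (auto simp: den_def)
  then show ?thesis by (auto simp: kzero_def)
qed

lemma chk_sound: "chk L \<Longrightarrow> den L = kzero"
proof -
  assume "chk L"
  then have "den (comb (msort L)) = kzero" unfolding chk_def by (rule den_zero)
  then show ?thesis by (simp only: den_comb den_mset[OF mset_msort])
qed

lemma keq_den:
  assumes "chk (A @ smL (-1) B @ smL (-1) (certL C))"
    and "\<forall>(c,k,i)\<in>set C. i \<le> 1 \<or> i - 2 \<in> {1..m}"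
  shows "keq m (den A) (den B)"
proof -
  have "den (A @ smL (-1) B @ smL (-1) (certL C)) = kzero" using assms(1) chk_sound by blast
  then have "den (A @ smL (-1) B @ smL (-1) (certL C)) c = 0" for c
    by (simp add: kzero_def)
  then have "den A c + (- den B c + - den (certL C) c) = 0" for c
    by (simp add: den_append den_smL kadd_def)
  then have "den A c - den B c = den (certL C) c" for c
    by (simp add: algebra_simps)
  then have "ksub (den A) (den B) = den (certL C)"
    unfolding ksub_def by blast
  then show ?thesis using certL_in[OF assms(2)] by (simp add: keq_def)
qed

definition zL :: "nat \<Rightarrow> nat list \<Rightarrow> pl" where
  "zL n l = (mulL (powL xL (n - 1)) (prodL (map alL (sort (remdups l)))) @
             mulL (powL yL (n - 1)) (prodL (map beL (sort (remdups l))))) @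
             mulL (powL wL (n - 1)) (prodL (map gaL (sort (remdups l))))"

lemma kz_den: "kz n (set l) = den (zL n l)"
  unfolding kz_def zL_def kalI_def kbeI_def kgaI_def sorted_list_of_set_sort_remdups
  by (simp only: kx_den ky_den kw_den kal_den kbe_den kga_den kpow_den kprod_den kmult_den den_append)


lemma emp_set: "({}::nat set) = set []" by simp
lemma ins_set: "insert (a::nat) (set l) = set (a # l)" by simp

lemma eq1: assumes "m \<ge> (3::nat)" shows "keq m (ksmult 9 (kz 3 {1,2,3}))
     (kadd (kadd (kadd (kadd (ksub
        (kmult (kz 2 {1,2}) (kz 2 {3}))
        (kmult (kz 2 {1,3}) (kz 2 {2})))
        (kmult (kz 2 {2,3}) (kz 2 {1})))
        (kmult (kz 1 {1,2}) (kz 3 {3})))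
        (ksmult (-1) (kmult (kz 1 {1,3}) (kz 3 {2}))))
        (kmult (kz 1 {2,3}) (kz 3 {1})))"
  apply (simp only: emp_set ins_set kz_den kzero_den
     ksmult_den kadd_den ksub_den kmult_den)
  apply (rule keq_den[where C="[(3, ((0,0,1), [5,8,11]), 0), (-1, ((1,0,0), [5,8,9]), 0), (-1, ((0,1,0), [5,8,10]), 0), (-1, ((1,0,0), [5,6,11]), 0), (-1, ((0,1,0), [5,7,11]), 0), (-1, ((1,0,0), [3,8,11]), 0), (-1, ((0,1,0), [4,8,11]), 0), (-1, ((0,0,1), [3,6,11]), 0), (-1, ((0,0,1), [4,7,11]), 0), (-1, ((0,0,1), [3,8,9]), 0), (-1, ((0,0,1), [4,8,10]), 0), (-1, ((0,0,1), [5,6,9]), 0), (-1, ((0,0,1), [5,7,10]), 0), (-3, ((1,0,0), [5,8,11]), 0), (-3, ((0,1,0), [5,8,11]), 0), (1, ((0,1,0), [3,6,11]), 0), (1, ((1,0,0), [4,7,11]), 0), (1, ((0,1,0), [3,8,9]), 0), (1, ((1,0,0), [4,8,10]), 0), (1, ((0,1,0), [5,6,9]), 0), (1, ((1,0,0), [5,7,10]), 0), (1, ((1,1,0), [8,9]), 3), (1, ((1,1,0), [8,10]), 3), (1, ((1,1,0), [6,11]), 3), (1, ((1,1,0), [7,11]), 3), (5, ((1,1,0), [3,11]), 4), (5, ((1,1,0), [4,11]), 4), (3, ((2,0,0), [8,11]), 3), (6, ((1,1,0), [8,11]), 3), (3, ((0,2,0), [8,11]), 3), (3, ((1,1,0),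 [3,6]), 5), (2, ((0,2,0), [3,6]), 5), (2, ((2,0,0), [4,7]), 5), (3, ((1,1,0), [4,7]), 5), (2, ((1,1,0), [3,9]), 4), (1, ((0,2,0), [3,9]), 4), (1, ((2,0,0), [4,10]), 4), (2, ((1,1,0), [4,10]), 4), (-1, ((1,1,0), [6,9]), 3), (-1, ((0,2,0), [6,9]), 3), (-1, ((2,0,0), [7,10]), 3), (-1, ((1,1,0), [7,10]), 3), (1, ((1,1,0), [4,9]), 4), (1, ((1,1,0), [3,10]), 4), (4, ((1,1,0), [4,6]), 5), (4, ((1,1,0), [3,7]), 5), (3, ((2,0,0), [3,11]), 4), (3, ((2,0,0), [4,11]), 4), (3, ((0,2,0), [3,11]), 4), (3, ((0,2,0), [4,11]), 4), (3, ((2,0,0), [3,6]), 5), (3, ((2,0,0), [3,7]), 5), (3, ((2,0,0), [4,6]), 5), (3, ((0,2,0), [3,7]), 5), (3, ((0,2,0), [4,6]), 5), (3, ((0,2,0), [4,7]), 5), ((-3/2), ((0,0,0), [3,6,10]), 1), ((3/2), ((0,0,1), [3,6,10]), 0), ((-3/2), ((1,0,0), [3,6,10]), 0), ((-3/2), ((0,1,0), [3,6,10]), 0), ((-3/2), ((0,0,0), [3,7,9]), 1), ((3/2), ((0,0,1), [3,7,9]), 0), ((-3/2), ((1,0,0), [3,7,9]), 0), ((-3/2), ((0,1,0), [3,7,9]), 0), ((-3/2), ((0,0,0), [3,7,10]), 1), ((3/2), ((0,0,1), [3,7,10]), 0), ((-3/2), ((1,0,0), [3,7,10]), 0), ((-3/2),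 ((0,1,0), [3,7,10]), 0), ((-3/2), ((0,0,0), [4,6,9]), 1), ((3/2), ((0,0,1), [4,6,9]), 0), ((-3/2), ((1,0,0), [4,6,9]), 0), ((-3/2), ((0,1,0), [4,6,9]), 0), ((-3/2), ((0,0,0), [4,6,10]), 1), ((3/2), ((0,0,1), [4,6,10]), 0), ((-3/2), ((1,0,0), [4,6,10]), 0), ((-3/2), ((0,1,0), [4,6,10]), 0), ((-3/2), ((0,0,0), [4,7,9]), 1), ((3/2), ((0,0,1), [4,7,9]), 0), ((-3/2), ((1,0,0), [4,7,9]), 0), ((-3/2), ((0,1,0), [4,7,9]), 0)]"])
  subgoal by code_simp
  subgoal using assms by simp
  done

lemma eq2: assumes "m \<ge> (3::nat)" shows "keq m (ksmult 9 (kz 5 {1,2,3}))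
     (kadd (kadd (kadd (kadd (ksub
        (kmult (kz 4 {1,2}) (kz 2 {3}))
        (kmult (kz 4 {1,3}) (kz 2 {2})))
        (kmult (kz 4 {2,3}) (kz 2 {1})))
        (kmult (kz 3 {1,2}) (kz 3 {3})))
        (ksmult (-1) (kmult (kz 3 {1,3}) (kz 3 {2}))))
        (kmult (kz 3 {2,3}) (kz 3 {1})))"
  apply (simp only: emp_set ins_set kz_den kzero_den
     ksmult_den kadd_den ksub_den kmult_den)
  apply (rule keq_den[where C="[(3, ((0,0,3), [5,8,11]), 0), (-1, ((1,0,2), [5,8,9]), 0), (-1, ((0,1,2), [5,8,10]), 0), (-1, ((1,0,2), [5,6,11]), 0), (-1, ((0,1,2), [5,7,11]), 0), (-1, ((1,0,2), [3,8,11]), 0), (-1, ((0,1,2), [4,8,11]), 0), (-1, ((2,0,1), [3,6,11]), 0), (-1, ((0,2,1), [4,7,11]), 0), (-1, ((2,0,1), [3,8,9]), 0), (-1, ((0,2,1), [4,8,10]), 0), (-1, ((2,0,1), [5,6,9]), 0), (-1, ((0,2,1), [5,7,10]), 0), (-3, ((1,0,2), [5,8,11]), 0), (-3, ((0,1,2), [5,8,11]), 0), (1, ((1,1,1), [5,8,9]), 0), (1, ((1,1,1), [5,8,10]), 0), (1, ((1,1,1), [5,6,11]), 0), (1, ((1,1,1), [5,7,11]), 0), (1, ((1,1,1), [3,8,11]), 0), (1, ((1,1,1), [4,8,11]), 0), (1, ((2,1,0), [3,6,11]), 0), (1, ((1,2,0), [4,7,11]), 0), (1, ((2,1,0), [3,8,9]),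 0), (1, ((1,2,0), [4,8,10]), 0), (1, ((2,1,0), [5,6,9]), 0), (1, ((1,2,0), [5,7,10]), 0), (3, ((2,0,1), [5,8,11]), 0), (6, ((1,1,1), [5,8,11]), 0), (3, ((0,2,1), [5,8,11]), 0), (-1, ((2,1,0), [5,8,9]), 0), (-1, ((1,2,0), [5,8,9]), 0), (-1, ((2,1,0), [5,8,10]), 0), (-1, ((1,2,0), [5,8,10]), 0), (-1, ((2,1,0), [5,6,11]), 0), (-1, ((1,2,0), [5,6,11]), 0), (-1, ((2,1,0), [5,7,11]), 0), (-1, ((1,2,0), [5,7,11]), 0), (-1, ((2,1,0), [3,8,11]), 0), (-1, ((1,2,0), [3,8,11]), 0), (-1, ((2,1,0), [4,8,11]), 0), (-1, ((1,2,0), [4,8,11]), 0), (-3, ((3,0,0), [5,8,11]), 0), (-9, ((2,1,0), [5,8,11]), 0), (-9, ((1,2,0), [5,8,11]), 0), (-3, ((0,3,0), [5,8,11]), 0), (9, ((3,1,0), [3,6]), 5), (13, ((2,2,0), [3,6]), 5), (13, ((2,2,0), [4,7]), 5), (9, ((1,3,0), [4,7]), 5), (2, ((3,1,0), [3,9]), 4), (3, ((2,2,0), [3,9]), 4), (3, ((2,2,0), [4,10]), 4), (2, ((1,3,0), [4,10]), 4), (-1, ((3,1,0), [6,9]), 3), (-1, ((2,2,0), [6,9]), 3), (-1, ((2,2,0), [7,10]), 3), (-1, ((1,3,0), [7,10]), 3), (1, ((3,1,0), [8,9]), 3), (2, ((2,2,0), [8,9]), 3), (1, ((1,3,0), [8,9]),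 3), (1, ((3,1,0), [8,10]), 3), (2, ((2,2,0), [8,10]), 3), (1, ((1,3,0), [8,10]), 3), (1, ((3,1,0), [6,11]), 3), (2, ((2,2,0), [6,11]), 3), (1, ((1,3,0), [6,11]), 3), (1, ((3,1,0), [7,11]), 3), (2, ((2,2,0), [7,11]), 3), (1, ((1,3,0), [7,11]), 3), (11, ((3,1,0), [3,11]), 4), (16, ((2,2,0), [3,11]), 4), (11, ((1,3,0), [3,11]), 4), (11, ((3,1,0), [4,11]), 4), (16, ((2,2,0), [4,11]), 4), (11, ((1,3,0), [4,11]), 4), (3, ((4,0,0), [8,11]), 3), (12, ((3,1,0), [8,11]), 3), (18, ((2,2,0), [8,11]), 3), (12, ((1,3,0), [8,11]), 3), (3, ((0,4,0), [8,11]), 3), (1, ((3,1,0), [4,9]), 4), (2, ((2,2,0), [4,9]), 4), (1, ((1,3,0), [3,9]), 4), (1, ((1,3,0), [4,9]), 4), (1, ((3,1,0), [3,10]), 4), (1, ((3,1,0), [4,10]), 4), (2, ((2,2,0), [3,10]), 4), (1, ((1,3,0), [3,10]), 4), (10, ((3,1,0), [4,6]), 5), (14, ((2,2,0), [4,6]), 5), (10, ((1,3,0), [3,6]), 5), (10, ((1,3,0), [4,6]), 5), (10, ((3,1,0), [3,7]), 5), (10, ((3,1,0), [4,7]), 5), (14, ((2,2,0), [3,7]), 5), (10, ((1,3,0), [3,7]), 5), (3, ((4,0,0), [3,11]), 4), (3, ((4,0,0), [4,11]), 4), (3, ((0,4,0), [3,11]), 4), (3, ((0,4,0), [4,11]),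 4), (3, ((4,0,0), [3,6]), 5), (3, ((4,0,0), [3,7]), 5), (3, ((4,0,0), [4,6]), 5), (3, ((4,0,0), [4,7]), 5), (3, ((0,4,0), [3,6]), 5), (3, ((0,4,0), [3,7]), 5), (3, ((0,4,0), [4,6]), 5), (3, ((0,4,0), [4,7]), 5), (-3, ((2,1,0), [3,6,9]), 0), ((-3/2), ((2,0,0), [4,7,10]), 1), ((3/2), ((2,0,1), [4,7,10]), 0), ((-3/2), ((3,0,0), [4,7,10]), 0), ((-9/2), ((2,1,0), [4,7,10]), 0), (-3, ((1,1,0), [4,7,10]), 1), (3, ((1,1,1), [4,7,10]), 0), (-3, ((1,2,0), [4,7,10]), 0), ((-3/2), ((2,0,0), [3,7,9]), 1), ((3/2), ((2,0,1), [3,7,9]), 0), ((-3/2), ((3,0,0), [3,7,9]), 0), ((-9/2), ((2,1,0), [3,7,9]), 0), ((-3/2), ((2,0,0), [4,6,9]), 1), ((3/2), ((2,0,1), [4,6,9]), 0), ((-3/2), ((3,0,0), [4,6,9]), 0), ((-9/2), ((2,1,0), [4,6,9]), 0), ((-3/2), ((2,0,0), [4,7,9]), 1), ((3/2), ((2,0,1), [4,7,9]), 0), ((-3/2), ((3,0,0), [4,7,9]), 0), ((-9/2), ((2,1,0), [4,7,9]), 0), (-3, ((1,1,0), [3,6,9]), 1), (3, ((1,1,1), [3,6,9]), 0), ((-9/2), ((1,2,0), [3,6,9]), 0), (-3, ((1,1,0), [3,7,9]), 1), (3, ((1,1,1), [3,7,9]), 0), ((-9/2), ((1,2,0), [3,7,9]),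 0), (-3, ((1,1,0), [4,6,9]), 1), (3, ((1,1,1), [4,6,9]), 0), ((-9/2), ((1,2,0), [4,6,9]), 0), (-3, ((1,1,0), [4,7,9]), 1), (3, ((1,1,1), [4,7,9]), 0), ((-9/2), ((1,2,0), [4,7,9]), 0), ((-3/2), ((2,0,0), [3,6,10]), 1), ((3/2), ((2,0,1), [3,6,10]), 0), ((-3/2), ((3,0,0), [3,6,10]), 0), ((-9/2), ((2,1,0), [3,6,10]), 0), ((-3/2), ((2,0,0), [3,7,10]), 1), ((3/2), ((2,0,1), [3,7,10]), 0), ((-3/2), ((3,0,0), [3,7,10]), 0), ((-9/2), ((2,1,0), [3,7,10]), 0), ((-3/2), ((2,0,0), [4,6,10]), 1), ((3/2), ((2,0,1), [4,6,10]), 0), ((-3/2), ((3,0,0), [4,6,10]), 0), ((-9/2), ((2,1,0), [4,6,10]), 0), (-3, ((1,1,0), [3,6,10]), 1), (3, ((1,1,1), [3,6,10]), 0), ((-9/2), ((1,2,0), [3,6,10]), 0), (-3, ((1,1,0), [3,7,10]), 1), (3, ((1,1,1), [3,7,10]), 0), ((-9/2), ((1,2,0), [3,7,10]), 0), (-3, ((1,1,0), [4,6,10]), 1), (3, ((1,1,1), [4,6,10]), 0), ((-9/2), ((1,2,0), [4,6,10]), 0), ((-3/2), ((0,2,0), [3,6,9]), 1), ((3/2), ((0,2,1), [3,6,9]), 0), ((-3/2), ((0,3,0), [3,6,9]), 0), ((-3/2), ((0,2,0), [3,6,10]), 1), ((3/2), ((0,2,1), [3,6,10]), 0), ((-3/2),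 ((0,3,0), [3,6,10]), 0), ((-3/2), ((0,2,0), [3,7,9]), 1), ((3/2), ((0,2,1), [3,7,9]), 0), ((-3/2), ((0,3,0), [3,7,9]), 0), ((-3/2), ((0,2,0), [3,7,10]), 1), ((3/2), ((0,2,1), [3,7,10]), 0), ((-3/2), ((0,3,0), [3,7,10]), 0), ((-3/2), ((0,2,0), [4,6,9]), 1), ((3/2), ((0,2,1), [4,6,9]), 0), ((-3/2), ((0,3,0), [4,6,9]), 0), ((-3/2), ((0,2,0), [4,6,10]), 1), ((3/2), ((0,2,1), [4,6,10]), 0), ((-3/2), ((0,3,0), [4,6,10]), 0), ((-3/2), ((0,2,0), [4,7,9]), 1), ((3/2), ((0,2,1), [4,7,9]), 0), ((-3/2), ((0,3,0), [4,7,9]), 0)]"])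
  subgoal by code_simp
  subgoal using assms by simp
  done

lemma eq3: assumes "m \<ge> (3::nat)" shows "keq m (ksmult 3 (kz 4 {1,2}))
     (kadd (kmult (kz 3 {1}) (kz 2 {2})) (kmult (kz 2 {1}) (kz 3 {2})))"
  apply (simp only: emp_set ins_set kz_den kzero_den
     ksmult_den kadd_den ksub_den kmult_den)
  apply (rule keq_den[where C="[(1, ((0,0,2), [5,8]), 0), (-1, ((1,0,1), [5,6]), 0), (-1, ((0,1,1), [5,7]), 0), (-1, ((1,0,1), [3,8]), 0), (-1, ((0,1,1), [4,8]), 0), (-1, ((1,0,1), [5,8]), 0), (-1, ((0,1,1), [5,8]), 0), (1, ((1,1,0), [5,6]), 0), (1, ((1,1,0), [5,7]), 0), (1, ((1,1,0), [3,8]), 0), (1, ((1,1,0), [4,8]), 0), (1, ((2,0,0), [5,8]), 0), (2, ((1,1,0), [5,8]), 0), (1, ((0,2,0), [5,8]), 0), (1, ((2,1,0), [6]), 3), (1, ((1,2,0), [6]), 3), (1, ((2,1,0), [7]), 3), (1, ((1,2,0), [7]), 3), (2, ((2,1,0), [3]), 4), (2, ((1,2,0), [3]), 4), (2, ((2,1,0), [4]), 4), (2, ((1,2,0), [4]), 4), (1, ((3,0,0), [8]), 3), (3, ((2,1,0), [8]), 3), (3, ((1,2,0), [8]), 3), (1, ((0,3,0), [8]), 3), (1, ((3,0,0), [3]), 4), (1, ((3,0,0), [4]), 4), (1, ((0,3,0), [3]), 4), (1, ((0,3,0), [4]), 4), ((-1/2), ((1,1,0), [3,6]), 0), ((-1/2),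 ((1,0,0), [4,7]), 1), ((1/2), ((1,0,1), [4,7]), 0), ((-1/2), ((2,0,0), [4,7]), 0), ((-1/2), ((1,1,0), [4,7]), 0), ((-1/2), ((1,0,0), [3,7]), 1), ((1/2), ((1,0,1), [3,7]), 0), ((-1/2), ((2,0,0), [3,7]), 0), (-1, ((1,1,0), [3,7]), 0), ((-1/2), ((1,0,0), [4,6]), 1), ((1/2), ((1,0,1), [4,6]), 0), ((-1/2), ((2,0,0), [4,6]), 0), (-1, ((1,1,0), [4,6]), 0), ((-1/2), ((0,1,0), [3,6]), 1), ((1/2), ((0,1,1), [3,6]), 0), ((-1/2), ((0,2,0), [3,6]), 0), ((-1/2), ((0,1,0), [3,7]), 1), ((1/2), ((0,1,1), [3,7]), 0), ((-1/2), ((0,2,0), [3,7]), 0), ((-1/2), ((0,1,0), [4,6]), 1), ((1/2), ((0,1,1), [4,6]), 0), ((-1/2), ((0,2,0), [4,6]), 0)]"])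
  subgoal by code_simp
  subgoal using assms by simp
  done

lemma eq4: assumes "m \<ge> (3::nat)" shows "keq m (ksmult 3 (kz 6 {1,2}))
     (kadd (kmult (kz 5 {1}) (kz 2 {2})) (kmult (kz 4 {1}) (kz 3 {2})))"
  apply (simp only: emp_set ins_set kz_den kzero_den
     ksmult_den kadd_den ksub_den kmult_den)
  apply (rule keq_den[where C="[(1, ((0,0,4), [5,8]), 0), (-1, ((1,0,3), [5,6]), 0), (-1, ((0,1,3), [5,7]), 0), (-1, ((3,0,1), [3,8]), 0), (-1, ((0,3,1), [4,8]), 0), (-1, ((1,0,3), [5,8]), 0), (-1, ((0,1,3), [5,8]), 0), (1, ((1,1,2), [5,6]), 0), (1, ((1,1,2), [5,7]), 0), (1, ((3,1,0), [3,8]), 0), (1, ((1,3,0), [4,8]), 0), (1, ((2,0,2), [5,8]), 0), (2, ((1,1,2), [5,8]), 0), (1, ((0,2,2), [5,8]), 0), (-1, ((2,1,1), [5,6]), 0), (-1, ((1,2,1), [5,6]), 0), (-1, ((2,1,1), [5,7]), 0), (-1, ((1,2,1), [5,7]), 0), (-1, ((3,0,1), [5,8]), 0), (-3, ((2,1,1), [5,8]), 0), (-3, ((1,2,1), [5,8]), 0), (-1, ((0,3,1), [5,8]), 0), (1, ((3,1,0), [5,6]), 0), (2, ((2,2,0), [5,6]), 0), (1, ((1,3,0), [5,6]), 0), (1, ((3,1,0), [5,7]), 0), (2, ((2,2,0), [5,7]), 0), (1, ((1,3,0), [5,7]), 0), (1, ((4,0,0), [5,8]), 0), (4, ((3,1,0),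 [5,8]), 0), (6, ((2,2,0), [5,8]), 0), (4, ((1,3,0), [5,8]), 0), (1, ((0,4,0), [5,8]), 0), (4, ((4,1,0), [3]), 4), (9, ((3,2,0), [3]), 4), (9, ((2,3,0), [4]), 4), (4, ((1,4,0), [4]), 4), (1, ((4,1,0), [6]), 3), (3, ((3,2,0), [6]), 3), (3, ((2,3,0), [6]), 3), (1, ((1,4,0), [6]), 3), (1, ((4,1,0), [7]), 3), (3, ((3,2,0), [7]), 3), (3, ((2,3,0), [7]), 3), (1, ((1,4,0), [7]), 3), (1, ((5,0,0), [8]), 3), (5, ((4,1,0), [8]), 3), (10, ((3,2,0), [8]), 3), (10, ((2,3,0), [8]), 3), (5, ((1,4,0), [8]), 3), (1, ((0,5,0), [8]), 3), (1, ((5,0,0), [3]), 4), (1, ((5,0,0), [4]), 4), (5, ((4,1,0), [4]), 4), (10, ((3,2,0), [4]), 4), (10, ((2,3,0), [3]), 4), (5, ((1,4,0), [3]), 4), (1, ((0,5,0), [3]), 4), (1, ((0,5,0), [4]), 4), ((-3/2), ((3,1,0), [3,6]), 0), ((-3/2), ((2,1,0), [4,7]), 1), ((3/2), ((2,1,1), [4,7]), 0), (-2, ((3,1,0), [4,7]), 0), (-3, ((2,2,0), [4,7]), 0), ((-3/2), ((1,2,0), [4,7]), 1), ((3/2), ((1,2,1), [4,7]), 0), ((-3/2), ((1,3,0), [4,7]), 0), ((-1/2), ((3,0,0), [4,6]), 1), ((1/2), ((3,0,1), [4,6]), 0), ((-1/2), ((4,0,0), [4,6]), 0), (-2, ((3,1,0),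 [4,6]), 0), ((-3/2), ((2,1,0), [3,6]), 1), ((3/2), ((2,1,1), [3,6]), 0), (-3, ((2,2,0), [3,6]), 0), ((-3/2), ((2,1,0), [4,6]), 1), ((3/2), ((2,1,1), [4,6]), 0), (-3, ((2,2,0), [4,6]), 0), ((-3/2), ((1,2,0), [3,6]), 1), ((3/2), ((1,2,1), [3,6]), 0), (-2, ((1,3,0), [3,6]), 0), ((-3/2), ((1,2,0), [4,6]), 1), ((3/2), ((1,2,1), [4,6]), 0), (-2, ((1,3,0), [4,6]), 0), ((-1/2), ((3,0,0), [3,7]), 1), ((1/2), ((3,0,1), [3,7]), 0), ((-1/2), ((4,0,0), [3,7]), 0), (-2, ((3,1,0), [3,7]), 0), ((-1/2), ((3,0,0), [4,7]), 1), ((1/2), ((3,0,1), [4,7]), 0), ((-1/2), ((4,0,0), [4,7]), 0), ((-3/2), ((2,1,0), [3,7]), 1), ((3/2), ((2,1,1), [3,7]), 0), (-3, ((2,2,0), [3,7]), 0), ((-3/2), ((1,2,0), [3,7]), 1), ((3/2), ((1,2,1), [3,7]), 0), (-2, ((1,3,0), [3,7]), 0), ((-1/2), ((0,3,0), [3,6]), 1), ((1/2), ((0,3,1), [3,6]), 0), ((-1/2), ((0,4,0), [3,6]), 0), ((-1/2), ((0,3,0), [3,7]), 1), ((1/2), ((0,3,1), [3,7]), 0), ((-1/2), ((0,4,0), [3,7]), 0), ((-1/2), ((0,3,0), [4,6]), 1), ((1/2), ((0,3,1), [4,6]), 0), ((-1/2), ((0,4,0), [4,6]), 0)]"])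
  subgoal by code_simp
  subgoal using assms by simp
  done

lemma eq5: assumes "m \<ge> (3::nat)" shows "keq m (kz 6 {}) kzero"
  apply (simp only: emp_set ins_set kz_den kzero_den
     ksmult_den kadd_den ksub_den kmult_den)
  apply (rule keq_den[where C="[(1, ((0,0,4), []), 0), (-1, ((1,0,3), []), 0), (-1, ((0,1,3), []), 0), (1, ((2,0,2), []), 0), (2, ((1,1,2), []), 0), (1, ((0,2,2), []), 0), (-1, ((3,0,1), []), 0), ((-1/2), ((2,1,1), []), 0), ((-1/2), ((1,2,1), []), 0), (-1, ((0,3,1), []), 0), (1, ((4,0,0), []), 0), ((3/2), ((3,1,0), []), 0), (1, ((2,2,0), []), 0), ((3/2), ((1,3,0), []), 0), (1, ((0,4,0), []), 0), ((-5/2), ((2,1,0), []), 1), ((-5/2), ((1,2,0), []), 1)]"])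
  subgoal by code_simp
  subgoal using assms by simp
  done

theorem lemma6p3:
  fixes m :: nat
  assumes "m \<ge> 3"
  shows
  "keq m (ksmult 9 (kz 3 {1,2,3}))
     (kadd (kadd (kadd (kadd (ksub
        (kmult (kz 2 {1,2}) (kz 2 {3}))
        (kmult (kz 2 {1,3}) (kz 2 {2})))
        (kmult (kz 2 {2,3}) (kz 2 {1})))
        (kmult (kz 1 {1,2}) (kz 3 {3})))
        (ksmult (-1) (kmult (kz 1 {1,3}) (kz 3 {2}))))
        (kmult (kz 1 {2,3}) (kz 3 {1})))
   \<and> keq m (ksmult 9 (kz 5 {1,2,3}))
     (kadd (kadd (kadd (kadd (ksub
        (kmult (kz 4 {1,2}) (kz 2 {3}))
        (kmult (kz 4 {1,3}) (kz 2 {2})))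
        (kmult (kz 4 {2,3}) (kz 2 {1})))
        (kmult (kz 3 {1,2}) (kz 3 {3})))
        (ksmult (-1) (kmult (kz 3 {1,3}) (kz 3 {2}))))
        (kmult (kz 3 {2,3}) (kz 3 {1})))
   \<and> keq m (ksmult 3 (kz 4 {1,2}))
     (kadd (kmult (kz 3 {1}) (kz 2 {2})) (kmult (kz 2 {1}) (kz 3 {2})))
   \<and> keq m (ksmult 3 (kz 6 {1,2}))
     (kadd (kmult (kz 5 {1}) (kz 2 {2})) (kmult (kz 4 {1}) (kz 3 {2})))
   \<and> keq m (kz 6 {}) kzero"
  using eq1 eq2 eq3 eq4 eq5 assms by blast

end
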